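(* Let $I$ be an infinite set, $\mathcal U\subseteq P(I)$ a non-principal ultrafilter, and $\mathbb X_i=\langle X_i,\rho_i\rangle$ ($i\in I$) $L$-structures. (a) If $\{i\in I:\mathbb X_i\models\varphi^{\rm conn}_n\}\in\mathcal U$ for some $n\in\omega$, then the ultraproduct $\prod_{\mathcal U}\mathbb X_i$ is connected; if moreover $|I|$ is smaller than the first measurable cardinal, the converse also holds. (b) For an $L$-structure $\mathbb X$: if $\mathbb X$ is of finite diameter then the ultrapower $\prod_{\mathcal U}\mathbb X$ is connected; if moreover $|I|$ is smaller than the first measurable cardinal, the converse also holds.
   Context: $L$ is a language with one binary relation symbol; an $L$-structure is $\mathbb X=\langle X,\rho\rangle$, $X\neq\emptyset$, $\rho\subseteq X^2$. Connectivity is defined via the reflexivization $\rho_R=\rho\cup\{(x,x):x\in X\}$: write $\rho_R^0=\rho_R$, $\rho_R^1=\rho_R^{-1}$; a path of length $n+1$ from $x$ to $y$ is $\langle\bar z,\epsilon\rangle$ with $\bar z\in X^n$, $\epsilon\in\{0,1\}^{n+1}$, and $x\,\rho_R^{\epsilon_0}\,z_0\,\rho_R^{\epsilon_1}\cdots z_{n-1}\,\rho_R^{\epsilon_n}\,y$. $\mathbb X$ is connected iff any two points are joined by a path of some finite length. $\mathbb X\models\varphi^{\rm conn}_n$ means any two points are joined by a path of length $n+1$; $\mathbb X$ is of finite diameter iff this holds for some $n$. The ultraproduct $\prod_{\mathcal U}\mathbb X_i$ has universe $(\prod_i X_i)/\!\sim_{\mathcal U}$, where $x\sim_{\mathcal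 U}y$ iff $\{i:x_i=y_i\}\in\mathcal U$, and relation $[x]\,\rho\,[y]$ iff $\{i:x_i\,\rho_i\,y_i\}\in\mathcal U$; the ultrapower is the case $\mathbb X_i=\mathbb X$ for all $i$. "Smaller than the first measurable cardinal": below the least measurable cardinal if one exists, arbitrary otherwise. *)

theory Defs
  imports Main "HOL-Library.Countable_Set" "HOL-Library.FuncSet"
begin

definition L_structure :: "'a set \<Rightarrow> ('a \<times> 'a) set \<Rightarrow> bool" where
  "L_structure X r \<longleftrightarrow> X \<noteq> {} \<and> r \<subseteq> X \<times> X"

definition reflz :: "'a set \<Rightarrow> ('a \<times> 'a) set \<Rightarrow> ('a \<times> 'a) set" where
  "reflz X r = r \<union> Id_on X"

text \<open>A path of length m from x to y: points w_0 = x, w_1, ..., w_m = y in X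
  (the intermediate ones are z_0..z_(m-2)), each consecutive pair related by
  rho_R or its converse (the choice of epsilon_k).\<close>
definition path_of_length :: "'a set \<Rightarrow> ('a \<times> 'a) set \<Rightarrow> nat \<Rightarrow> 'a \<Rightarrow> 'a \<Rightarrow> bool" where
  "path_of_length X r m x y \<longleftrightarrow>
     (\<exists>ws. length ws = Suc m \<and> set ws \<subseteq> X \<and> ws ! 0 = x \<and> ws ! m = y \<and>
        (\<forall>k<m. (ws ! k, ws ! Suc k) \<in> reflz X r \<or> (ws ! k, ws ! Suc k) \<in> (reflz X r)\<inverse>))"

definition models_conn :: "nat \<Rightarrow> 'a set \<Rightarrow> ('a \<times> 'a) set \<Rightarrow> bool" where
  "models_conn n X r \<longleftrightarrow> (\<forall>x\<in>X. \<forall>y\<in>X. path_of_length X r (Suc n) x y)"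

definition connected_str :: "'a set \<Rightarrow> ('a \<times> 'a) set \<Rightarrow> bool" where
  "connected_str X r \<longleftrightarrow> (\<forall>x\<in>X. \<forall>y\<in>X. \<exists>n. path_of_length X r (Suc n) x y)"

definition finite_diameter :: "'a set \<Rightarrow> ('a \<times> 'a) set \<Rightarrow> bool" where
  "finite_diameter X r \<longleftrightarrow> (\<exists>n. models_conn n X r)"

definition ultrafilter_on :: "'i set \<Rightarrow> 'i set set \<Rightarrow> bool" where
  "ultrafilter_on I U \<longleftrightarrow>
     U \<subseteq> Pow I \<and> I \<in> U \<and> {} \<notin> U \<and>
     (\<forall>A\<in>U. \<forall>B. A \<subseteq> B \<and> B \<subseteq> I \<longrightarrow> B \<in> U) \<and>
     (\<forall>A\<in>U. \<forall>B\<in>U. A \<inter> B \<in> U) \<and>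
     (\<forall>A. A \<subseteq> I \<longrightarrow> A \<in> U \<or> I - A \<in> U)"

definition nonprincipal :: "'i set \<Rightarrow> 'i set set \<Rightarrow> bool" where
  "nonprincipal I U \<longleftrightarrow> \<not> (\<exists>i\<in>I. U = {A. A \<subseteq> I \<and> i \<in> A})"

definition ueq :: "'i set \<Rightarrow> 'i set set \<Rightarrow> ('i \<Rightarrow> 'a) set \<Rightarrow> (('i \<Rightarrow> 'a) \<times> ('i \<Rightarrow> 'a)) set" where
  "ueq I U P = {(f, g). f \<in> P \<and> g \<in> P \<and> {i\<in>I. f i = g i} \<in> U}"

definition uprod_univ :: "'i set \<Rightarrow> 'i set set \<Rightarrow> ('i \<Rightarrow> 'a set) \<Rightarrow> ('i \<Rightarrow> 'a) set set" where
  "uprod_univ I U X = (Pi I X) // ueq I U (Pi I X)"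

definition uprod_rel :: "'i set \<Rightarrow> 'i set set \<Rightarrow> ('i \<Rightarrow> 'a set) \<Rightarrow> ('i \<Rightarrow> ('a \<times> 'a) set)
     \<Rightarrow> (('i \<Rightarrow> 'a) set \<times> ('i \<Rightarrow> 'a) set) set" where
  "uprod_rel I U X r = {(A, B). A \<in> uprod_univ I U X \<and> B \<in> uprod_univ I U X \<and>
      (\<exists>f\<in>A. \<exists>g\<in>B. {i\<in>I. (f i, g i) \<in> r i} \<in> U)}"

text \<open>K (of cardinality kappa) is measurable: kappa uncountable and there is a non-principal
  kappa-complete ultrafilter on K; |F| < |K| is expressed as "no injection from K into F".\<close>
definition measurable_set :: "'a set \<Rightarrow> bool" where
  "measurable_set K \<longleftrightarrow> uncountable K \<and>
     (\<exists>V. ultrafilter_on K V \<and> nonprincipal K V \<and>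
        (\<forall>F. F \<subseteq> V \<and> F \<noteq> {} \<and> \<not> (\<exists>g. inj_on g K \<and> g ` K \<subseteq> F) \<longrightarrow> \<Inter>F \<in> V))"

text \<open>|I| is smaller than the first measurable cardinal (arbitrary if none exists):
  no measurable cardinal kappa <= |I|, i.e. no measurable subset of I.\<close>
definition below_first_measurable :: "'a set \<Rightarrow> bool" where
  "below_first_measurable I \<longleftrightarrow> \<not> (\<exists>K\<subseteq>I. measurable_set K)"

end

theory Submission
  imports Defs
begin
unbundle cardinal_syntax


lemma uf_sub: "ultrafilter_on I U \<Longrightarrow> A \<in> U \<Longrightarrow> A \<subseteq> I"
  unfolding ultrafilter_on_def by blast
lemma uf_I: "ultrafilter_on I U \<Longrightarrow> I \<in> U"
  unfolding ultrafilter_on_def by blast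
lemma uf_empty: "ultrafilter_on I U \<Longrightarrow> {} \<notin> U"
  unfolding ultrafilter_on_def by blast
lemma uf_up: "ultrafilter_on I U \<Longrightarrow> A \<in> U \<Longrightarrow> A \<subseteq> B \<Longrightarrow> B \<subseteq> I \<Longrightarrow> B \<in> U"
  unfolding ultrafilter_on_def by blast
lemma uf_int: "ultrafilter_on I U \<Longrightarrow> A \<in> U \<Longrightarrow> B \<in> U \<Longrightarrow> A \<inter> B \<in> U"
  unfolding ultrafilter_on_def by blast
lemma uf_compl: "ultrafilter_on I U \<Longrightarrow> A \<subseteq> I \<Longrightarrow> A \<notin> U \<Longrightarrow> I - A \<in> U"
  unfolding ultrafilter_on_def by blast
lemma uf_compl2: "ultrafilter_on I U \<Longrightarrow> A \<in> U \<Longrightarrow> I - A \<notin> U"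
  using uf_int[of I U A "I - A"] uf_empty[of I U] by auto
lemma uf_notin_sub: "ultrafilter_on I U \<Longrightarrow> A \<notin> U \<Longrightarrow> B \<subseteq> A \<Longrightarrow> A \<subseteq> I \<Longrightarrow> B \<notin> U"
  using uf_up by blast
lemma uf_Un: "ultrafilter_on I U \<Longrightarrow> A \<union> B \<in> U \<Longrightarrow> A \<in> U \<or> B \<in> U"
proof (rule ccontr)
  assume u: "ultrafilter_on I U" and ab: "A \<union> B \<in> U" and n: "\<not> (A \<in> U \<or> B \<in> U)"
  have s: "A \<union> B \<subseteq> I" using uf_sub[OF u ab] .
  have "I - A \<in> U" using uf_compl[OF u] s n by auto
  hence "(A \<union> B) \<inter> (I - A) \<in> U" using uf_int[OF u ab] by auto
  hence "B \<in> U" using uf_up[OF u] s by (metis Diff_subset_conv Int_lower2 inf_commute le_infI1 le_sup_iff order_refl sup_commute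
        Int_Diff Un_Diff_cancel inf.orderE) 
  thus False using n by auto
qed
lemma uf_fin_Inter: "ultrafilter_on I U \<Longrightarrow> (\<forall>k<(m::nat). E k \<in> U) \<Longrightarrow> I \<inter> (\<Inter>k<m. E k) \<in> U"
proof (induction m)
  case 0 thus ?case using uf_I by auto
next
  case (Suc m)
  have "I \<inter> (\<Inter>k<Suc m. E k) = (I \<inter> (\<Inter>k<m. E k)) \<inter> E m"
    by (auto simp: lessThan_Suc)
  thus ?case using Suc uf_int[of I U _ "E m"] by auto
qed



lemma single_notin:
  assumes u: "ultrafilter_on I U" and np: "nonprincipal I U" and i: "i \<in> I"
  shows "{i} \<notin> U"
proof
  assume si: "{i} \<in> U"
  have "U = {A. A \<subseteq> I \<and> i \<in> A}"
  proof (intro set_eqI iffI)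
    fix A assume A: "A \<in> U"
    have "A \<inter> {i} \<in> U" using uf_int[OF u A si] .
    hence "A \<inter> {i} \<noteq> {}" using uf_empty[OF u] by metis
    thus "A \<in> {A. A \<subseteq> I \<and> i \<in> A}" using uf_sub[OF u A] by auto
  next
    fix A assume "A \<in> {A. A \<subseteq> I \<and> i \<in> A}"
    thus "A \<in> U" using uf_up[OF u si] by auto
  qed
  thus False using np i unfolding nonprincipal_def by blast
qed

lemma count_incomplete:
  assumes u: "ultrafilter_on I U" and np: "nonprincipal I U" and bm: "below_first_measurable I"
  shows "\<exists>A::nat \<Rightarrow> 'i set. (\<forall>n. A n \<in> U) \<and> \<Inter>(range A) \<notin> U"
proof (rule ccontr)
  assume "\<not> ?thesis"
  hence cc: "\<And>A::nat \<Rightarrow> 'i set. (\<forall>n. A n \<in> U) \<Longrightarrow> \<Inter>(range A) \<in> U" by blast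
  define bad where "bad K \<phi> \<longleftrightarrow> K \<subseteq> I \<and> (\<forall>i\<in>I. \<phi> i \<in> K) \<and> (\<forall>k\<in>K. {i\<in>I. \<phi> i = k} \<notin> U)"
    for K :: "'i set" and \<phi> :: "'i \<Rightarrow> 'i"
  have "bad I id"
  proof -
    have "\<And>k. k \<in> I \<Longrightarrow> {i\<in>I. id i = k} = {k}" by auto
    thus ?thesis unfolding bad_def using single_notin[OF u np] by auto
  qed
  then have Qne: "card_of I \<in> card_of ` {K. \<exists>\<phi>. bad K \<phi>}" by blast
  obtain z where zQ: "z \<in> card_of ` {K. \<exists>\<phi>. bad K \<phi>}"
     and zmin: "\<And>y. (y, z) \<in> ordLess \<Longrightarrow> y \<notin> card_of ` {K. \<exists>\<phi>. bad K \<phi>}"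
    using wfE_min[OF wf_ordLess Qne] by metis
  from zQ obtain K0 where zK: "z = card_of K0" and "\<exists>\<phi>. bad K0 \<phi>" by (rule imageE) simp
  then obtain \<phi>0 where bad0: "bad K0 \<phi>0" by blast
  have minK': "\<And>K \<phi>. bad K \<phi> \<Longrightarrow> \<not> |K| <o |K0|"
  proof
    fix K \<phi> assume "bad K \<phi>" "|K| <o |K0|"
    hence "card_of K \<in> card_of ` {K. \<exists>\<phi>. bad K \<phi>}" "(card_of K, z) \<in> ordLess" using zK by auto
    thus False using zmin by blast
  qed
  have K0I: "K0 \<subseteq> I" and phiK: "\<And>i. i \<in> I \<Longrightarrow> \<phi>0 i \<in> K0"
    and fib: "\<And>k. k \<in> K0 \<Longrightarrow> {i\<in>I. \<phi>0 i = k} \<notin> U"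
    using bad0 unfolding bad_def by auto
  have Ine: "I \<noteq> {}" using uf_I[OF u] uf_empty[OF u] by metis
  hence K0ne: "K0 \<noteq> {}" using phiK by blast
  have unc: "uncountable K0"
  proof
    assume cK: "countable K0"
    define A where "A n = I - {i\<in>I. \<phi>0 i = from_nat_into K0 n}" for n
    have "\<forall>n. A n \<in> U"
      using uf_compl[OF u] fib from_nat_into[OF K0ne] unfolding A_def by auto
    hence "\<Inter>(range A) \<in> U" by (rule cc)
    moreover have "\<Inter>(range A) = {}"
    proof -
      { fix i assume i: "i \<in> \<Inter>(range A)"
        hence iI: "i \<in> I" unfolding A_def by auto
        obtain n where "from_nat_into K0 n = \<phi>0 i"
          using from_nat_into_surj[OF cK phiK[OF iI]] by metis
        hence "i \<notin> A n" using iI unfolding A_def by auto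
        hence False using i by auto }
      thus ?thesis by auto
    qed
    ultimately show False using uf_empty[OF u] by auto
  qed
  define V where "V = {S. S \<subseteq> K0 \<and> {i\<in>I. \<phi>0 i \<in> S} \<in> U}"
  have ufV: "ultrafilter_on K0 V"
    unfolding ultrafilter_on_def
  proof (intro conjI ballI allI impI)
    show "V \<subseteq> Pow K0" unfolding V_def by auto
    have "{i\<in>I. \<phi>0 i \<in> K0} = I" using phiK by auto
    thus "K0 \<in> V" unfolding V_def using uf_I[OF u] by auto
    show "{} \<notin> V" unfolding V_def using uf_empty[OF u] by auto
  next
    fix A B assume "A \<in> V" "A \<subseteq> B \<and> B \<subseteq> K0"
    thus "B \<in> V" unfolding V_def using uf_up[OF u, of "{i\<in>I. \<phi>0 i \<in> A}" "{i\<in>I. \<phi>0 i \<in> B}"]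
      by auto
  next
    fix A B assume "A \<in> V" "B \<in> V"
    moreover have "{i\<in>I. \<phi>0 i \<in> A \<inter> B} = {i\<in>I. \<phi>0 i \<in> A} \<inter> {i\<in>I. \<phi>0 i \<in> B}" by auto
    ultimately show "A \<inter> B \<in> V" unfolding V_def using uf_int[OF u] by auto
  next
    fix A assume "A \<subseteq> K0"
    moreover have "{i\<in>I. \<phi>0 i \<in> K0 - A} = I - {i\<in>I. \<phi>0 i \<in> A}" using phiK by auto
    ultimately show "A \<in> V \<or> K0 - A \<in> V" unfolding V_def using uf_compl[OF u] by auto
  qed
  have npV: "nonprincipal K0 V"
  proof -
    { fix k assume k: "k \<in> K0" and eq: "V = {A. A \<subseteq> K0 \<and> k \<in> A}"
      hence "{k} \<in> V" by auto
      hence "{i\<in>I. \<phi>0 i \<in> {k}} \<in> U" unfolding V_def by auto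
      hence False using fib[OF k] by auto }
    thus ?thesis unfolding nonprincipal_def by blast
  qed
  have compl: "\<forall>F. F \<subseteq> V \<and> F \<noteq> {} \<and> \<not> (\<exists>g. inj_on g K0 \<and> g ` K0 \<subseteq> F) \<longrightarrow> \<Inter>F \<in> V"
  proof (intro allI impI)
    fix F assume F: "F \<subseteq> V \<and> F \<noteq> {} \<and> \<not> (\<exists>g. inj_on g K0 \<and> g ` K0 \<subseteq> F)"
    have Fless: "|F| <o |K0|" using F card_of_ordLess by blast
    show "\<Inter>F \<in> V"
    proof (rule ccontr)
      assume nV: "\<Inter>F \<notin> V"
      have "\<Inter>F \<subseteq> K0" using F unfolding V_def by auto
      define T where "T = {i\<in>I. \<phi>0 i \<in> \<Inter>F}"
      have TnU: "T \<notin> U" using nV \<open>\<Inter>F \<subseteq> K0\<close> unfolding V_def T_def by auto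
      define Sel where "Sel i = (SOME S. S \<in> F \<and> \<phi>0 i \<notin> S)" for i
      have Sel: "\<And>i. i \<in> I - T \<Longrightarrow> Sel i \<in> F \<and> \<phi>0 i \<notin> Sel i"
      proof -
        fix i assume "i \<in> I - T"
        hence "\<exists>S. S \<in> F \<and> \<phi>0 i \<notin> S" unfolding T_def by auto
        thus "Sel i \<in> F \<and> \<phi>0 i \<notin> Sel i" unfolding Sel_def by (rule someI_ex)
      qed
      define key where "key i = (if i \<in> T then None else Some (Sel i))" for i
      define ch where "ch \<kappa> = (SOME j. j \<in> I \<and> key j = \<kappa>)" for \<kappa>
      define \<psi> where "\<psi> i = ch (key i)" for i
      define K' where "K' = \<psi> ` I"
      have psi: "\<And>i. i \<in> I \<Longrightarrow> \<psi> i \<in> I \<and> key (\<psi> i) = key i"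
      proof -
        fix i assume "i \<in> I"
        hence "\<exists>j. j \<in> I \<and> key j = key i" by blast
        thus "\<psi> i \<in> I \<and> key (\<psi> i) = key i" unfolding \<psi>_def ch_def by (rule someI_ex)
      qed
      have badK': "bad K' \<psi>"
        unfolding bad_def
      proof (intro conjI ballI)
        show "K' \<subseteq> I" unfolding K'_def using psi by auto
        show "\<And>i. i \<in> I \<Longrightarrow> \<psi> i \<in> K'" unfolding K'_def by auto
      next
        fix k assume "k \<in> K'"
        then obtain j where j: "j \<in> I" and kj: "k = \<psi> j" unfolding K'_def by auto
        have sub: "{i\<in>I. \<psi> i = k} \<subseteq> {i\<in>I. key i = key j}"
        proof
          fix i assume "i \<in> {i\<in>I. \<psi> i = k}"
          hence iI: "i \<in> I" and e: "\<psi> i = \<psi> j" using kj by auto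
          have "key i = key (\<psi> i)" using psi[OF iI] by simp
          also have "\<dots> = key j" using e psi[OF j] by simp
          finally show "i \<in> {i\<in>I. key i = key j}" using iI by simp
        qed
        show "{i\<in>I. \<psi> i = k} \<notin> U"
        proof (cases "j \<in> T")
          case True
          hence "{i\<in>I. key i = key j} = T" unfolding key_def T_def by auto
          thus ?thesis using sub TnU uf_notin_sub[OF u] unfolding T_def by blast
        next
          case False
          hence jT: "j \<in> I - T" using j by auto
          have SV: "Sel j \<in> V" using Sel[OF jT] F by auto
          hence inU: "{i\<in>I. \<phi>0 i \<in> Sel j} \<in> U" unfolding V_def by auto
          have "{i\<in>I. key i = key j} \<subseteq> I - {i\<in>I. \<phi>0 i \<in> Sel j}"
            using False Sel unfolding key_def by (auto split: if_splits)
          thus ?thesis using sub uf_compl2[OF u inU] uf_notin_sub[OF u] by blast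
        qed
      qed
      have "K' = ch ` (key ` I)" unfolding K'_def \<psi>_def by auto
      hence c1: "|K'| \<le>o |key ` I|" using card_of_image by metis
      have "key ` I \<subseteq> {None} \<union> Some ` F" using Sel unfolding key_def by auto
      hence c2: "|key ` I| \<le>o |{None} \<union> Some ` F|" using card_of_mono1 by blast
      have infK0: "\<not> finite K0" using unc countable_finite by blast
      have c3: "|{None::'i set option}| <o |K0|"
        by (rule finite_ordLess_infinite[OF card_of_Well_order card_of_Well_order, unfolded Field_card_of])
           (simp_all add: infK0)
      have c4: "|Some ` F| <o |K0|"
        using card_of_image[of Some F] Fless ordLeq_ordLess_trans by blast
      have "|{None} \<union> Some ` F| <o |K0|" using card_of_Un_ordLess_infinite[OF infK0 c3 c4] .
      hence "|K'| <o |K0|" using c1 c2 ordLeq_ordLess_trans ordLeq_transitive by blast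
      thus False using minK' badK' by blast
    qed
  qed
  have "measurable_set K0" unfolding measurable_set_def using unc ufV npV compl by blast
  thus False using bm K0I unfolding below_first_measurable_def by blast
qed



lemma ueq_equiv:
  assumes u: "ultrafilter_on I U"
  shows "equiv (Pi I X) (ueq I U (Pi I X))"
proof (rule equivI)
  show "ueq I U (Pi I X) \<subseteq> Pi I X \<times> Pi I X" unfolding ueq_def by auto
  show "refl_on (Pi I X) (ueq I U (Pi I X))"
    unfolding refl_on_def ueq_def using uf_I[OF u] by auto
  show "sym (ueq I U (Pi I X))"
    unfolding sym_def ueq_def by (auto simp: eq_commute)
  show "trans (ueq I U (Pi I X))"
  proof (rule transI)
    fix f g h assume a1: "(f, g) \<in> ueq I U (Pi I X)" and a2: "(g, h) \<in> ueq I U (Pi I X)"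
    have a: "(f, g) \<in> ueq I U (Pi I X) \<and> (g, h) \<in> ueq I U (Pi I X)" using a1 a2 by simp
    hence "{i\<in>I. f i = g i} \<inter> {i\<in>I. g i = h i} \<in> U" unfolding ueq_def using uf_int[OF u] by auto
    moreover have "{i\<in>I. f i = g i} \<inter> {i\<in>I. g i = h i} \<subseteq> {i\<in>I. f i = h i}" by auto
    ultimately have "{i\<in>I. f i = h i} \<in> U" using uf_up[OF u] by blast
    thus "(f, h) \<in> ueq I U (Pi I X)" using a unfolding ueq_def by auto
  qed
qed

lemma cls_in_univ: "f \<in> Pi I X \<Longrightarrow> ueq I U (Pi I X) `` {f} \<in> uprod_univ I U X"
  unfolding uprod_univ_def by (rule quotientI)

lemma univ_cls: "W \<in> uprod_univ I U X \<Longrightarrow> \<exists>f\<in>Pi I X. W = ueq I U (Pi I X) `` {f}"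
  unfolding uprod_univ_def by (auto elim: quotientE)

lemma self_in_cls: "ultrafilter_on I U \<Longrightarrow> f \<in> Pi I X \<Longrightarrow> f \<in> ueq I U (Pi I X) `` {f}"
  using ueq_equiv[of I U X] by (meson equiv_class_self)

lemma same_cls:
  assumes u: "ultrafilter_on I U" and W: "W \<in> uprod_univ I U X" and a: "a \<in> W" and b: "b \<in> W"
  shows "a \<in> Pi I X \<and> b \<in> Pi I X \<and> {i\<in>I. a i = b i} \<in> U"
proof -
  have eq: "equiv (Pi I X) (ueq I U (Pi I X))" by (rule ueq_equiv[OF u])
  have "(a, b) \<in> ueq I U (Pi I X)"
    using W a b unfolding uprod_univ_def by (meson eq quotient_eq_iff)
  thus ?thesis unfolding ueq_def by auto
qed

lemma cls_eq:
  assumes u: "ultrafilter_on I U" and f: "f \<in> Pi I X" and g: "g \<in> Pi I X"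
    and e: "{i\<in>I. f i = g i} \<in> U"
  shows "ueq I U (Pi I X) `` {f} = ueq I U (Pi I X) `` {g}"
proof -
  have "(f, g) \<in> ueq I U (Pi I X)" using f g e unfolding ueq_def by auto
  thus ?thesis using equiv_class_eq[OF ueq_equiv[OF u]] by blast
qed

lemma step_fwd1:
  assumes u: "ultrafilter_on I U" and a: "a \<in> Pi I X" and b: "b \<in> Pi I X"
    and S: "{i\<in>I. (a i, b i) \<in> reflz (X i) (r i)} \<in> U"
  shows "(ueq I U (Pi I X) `` {a}, ueq I U (Pi I X) `` {b}) \<in> reflz (uprod_univ I U X) (uprod_rel I U X r)"
proof -
  have "{i\<in>I. (a i, b i) \<in> reflz (X i) (r i)} = {i\<in>I. (a i, b i) \<in> r i} \<union> {i\<in>I. a i = b i \<and> a i \<in> X i}"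
    unfolding reflz_def by auto
  hence "{i\<in>I. (a i, b i) \<in> r i} \<union> {i\<in>I. a i = b i \<and> a i \<in> X i} \<in> U" using S by simp
  hence "{i\<in>I. (a i, b i) \<in> r i} \<in> U \<or> {i\<in>I. a i = b i \<and> a i \<in> X i} \<in> U"
    by (rule uf_Un[OF u])
  thus ?thesis
  proof
    assume "{i\<in>I. (a i, b i) \<in> r i} \<in> U"
    hence "(ueq I U (Pi I X) `` {a}, ueq I U (Pi I X) `` {b}) \<in> uprod_rel I U X r"
      apply (simp only: uprod_rel_def mem_Collect_eq case_prod_conv)
      using cls_in_univ[OF a] cls_in_univ[OF b] self_in_cls[OF u a] self_in_cls[OF u b]
      by blast
    thus ?thesis unfolding reflz_def by (rule UnI1)
  next
    assume "{i\<in>I. a i = b i \<and> a i \<in> X i} \<in> U"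
    hence "{i\<in>I. a i = b i} \<in> U" by (rule uf_up[OF u]) auto
    hence "ueq I U (Pi I X) `` {a} = ueq I U (Pi I X) `` {b}" by (rule cls_eq[OF u a b])
    thus ?thesis unfolding reflz_def using cls_in_univ[OF a] cls_in_univ[OF b] by auto
  qed
qed

lemma step_back1:
  assumes u: "ultrafilter_on I U" and W1: "W1 \<in> uprod_univ I U X" and W2: "W2 \<in> uprod_univ I U X"
    and a: "a \<in> W1" and b: "b \<in> W2"
    and R: "(W1, W2) \<in> reflz (uprod_univ I U X) (uprod_rel I U X r)"
  shows "{i\<in>I. (a i, b i) \<in> reflz (X i) (r i)} \<in> U"
  using R unfolding reflz_def
proof
  assume "(W1, W2) \<in> uprod_rel I U X r"
  then obtain f g where f: "f \<in> W1" and g: "g \<in> W2" and S: "{i\<in>I. (f i, g i) \<in> r i} \<in> U"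
    unfolding uprod_rel_def by auto
  have 1: "{i\<in>I. a i = f i} \<in> U" using same_cls[OF u W1 a f] by blast
  have 2: "{i\<in>I. b i = g i} \<in> U" using same_cls[OF u W2 b g] by blast
  have "{i\<in>I. a i = f i} \<inter> {i\<in>I. b i = g i} \<inter> {i\<in>I. (f i, g i) \<in> r i} \<in> U"
    using uf_int[OF u uf_int[OF u 1 2] S] .
  moreover have "{i\<in>I. a i = f i} \<inter> {i\<in>I. b i = g i} \<inter> {i\<in>I. (f i, g i) \<in> r i}
      \<subseteq> {i\<in>I. (a i, b i) \<in> r i \<union> Id_on (X i)}" by auto
  ultimately show "{i\<in>I. (a i, b i) \<in> r i \<union> Id_on (X i)} \<in> U" by (rule uf_up[OF u]) auto
next
  assume "(W1, W2) \<in> Id_on (uprod_univ I U X)"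
  hence "W1 = W2" by auto
  hence ab: "a \<in> Pi I X \<and> {i\<in>I. a i = b i} \<in> U" using same_cls[OF u W1 a] b by auto
  have sub: "{i\<in>I. a i = b i} \<subseteq> {i\<in>I. (a i, b i) \<in> r i \<union> Id_on (X i)}" using ab by (auto simp: Pi_iff)
  show "{i\<in>I. (a i, b i) \<in> r i \<union> Id_on (X i)} \<in> U" by (rule uf_up[OF u conjunct2[OF ab] sub]) auto
qed



lemma path_ext:
  assumes "path_of_length X r m x y"
  shows "path_of_length X r (Suc m) x y"
proof -
  obtain ws where l: "length ws = Suc m" and s: "set ws \<subseteq> X" and h: "ws ! 0 = x" and t: "ws ! m = y"
    and st: "\<forall>k<m. (ws ! k, ws ! Suc k) \<in> reflz X r \<or> (ws ! k, ws ! Suc k) \<in> (reflz X r)\<inverse>"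
    using assms unfolding path_of_length_def by blast
  have yX: "y \<in> X" using s t l by (metis lessI nth_mem subsetD)
  define ws' where "ws' = ws @ [y]"
  have n1: "\<And>k. k \<le> m \<Longrightarrow> ws' ! k = ws ! k" unfolding ws'_def using l by (simp add: nth_append)
  have n2: "ws' ! Suc m = y" unfolding ws'_def using l by (simp add: nth_append)
  show ?thesis unfolding path_of_length_def
  proof (intro exI conjI allI impI)
    show "length ws' = Suc (Suc m)" unfolding ws'_def using l by simp
    show "set ws' \<subseteq> X" unfolding ws'_def using s yX by simp
    show "ws' ! 0 = x" using n1[of 0] h by simp
    show "ws' ! Suc m = y" by (rule n2)
  next
    fix k assume k: "k < Suc m"
    show "(ws' ! k, ws' ! Suc k) \<in> reflz X r \<or> (ws' ! k, ws' ! Suc k) \<in> (reflz X r)\<inverse>"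
    proof (cases "k < m")
      case True
      thus ?thesis using st n1[of k] n1[of "Suc k"] by simp
    next
      case False
      hence "k = m" using k by simp
      thus ?thesis using n1[of m] n2 t yX unfolding reflz_def by auto
    qed
  qed
qed

lemma path_mono:
  assumes "path_of_length X r m x y" and "m \<le> m'"
  shows "path_of_length X r m' x y"
  using assms(2,1)
proof (induction m' rule: dec_induct)
  case base thus ?case by simp
next
  case (step n) show ?case by (rule path_ext[OF step.IH[OF step.prems]])
qed

lemma conn_fwd:
  assumes u: "ultrafilter_on I U" and A: "{i\<in>I. models_conn n (X i) (r i)} \<in> U"
  shows "connected_str (uprod_univ I U X) (uprod_rel I U X r)"
  unfolding connected_str_def
proof (intro ballI)
  fix W W' assume W: "W \<in> uprod_univ I U X" and W': "W' \<in> uprod_univ I U X"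
  define cls where "cls f = ueq I U (Pi I X) `` {f}" for f
  obtain f where f: "f \<in> Pi I X" and Wf: "W = cls f" using univ_cls[OF W] unfolding cls_def by blast
  obtain g where g: "g \<in> Pi I X" and Wg: "W' = cls g" using univ_cls[OF W'] unfolding cls_def by blast
  define AA where "AA = {i\<in>I. models_conn n (X i) (r i)}"
  have pex: "\<And>i. i \<in> AA \<Longrightarrow> path_of_length (X i) (r i) (Suc n) (f i) (g i)"
    using f g unfolding AA_def models_conn_def by auto
  define p where "p i = (SOME ws. length ws = Suc (Suc n) \<and> set ws \<subseteq> X i \<and> ws ! 0 = f i \<and> ws ! Suc n = g i \<and>
        (\<forall>k<Suc n. (ws ! k, ws ! Suc k) \<in> reflz (X i) (r i) \<or> (ws ! k, ws ! Suc k) \<in> (reflz (X i) (r i))\<inverse>))" for i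
  have pp: "\<And>i. i \<in> AA \<Longrightarrow> length (p i) = Suc (Suc n) \<and> set (p i) \<subseteq> X i \<and> p i ! 0 = f i \<and> p i ! Suc n = g i \<and>
        (\<forall>k<Suc n. (p i ! k, p i ! Suc k) \<in> reflz (X i) (r i) \<or> (p i ! k, p i ! Suc k) \<in> (reflz (X i) (r i))\<inverse>)"
  proof -
    fix i assume "i \<in> AA"
    from pex[OF this] show "?thesis i" unfolding p_def path_of_length_def by (rule someI_ex)
  qed
  define h where "h k i = (if i \<in> AA then p i ! k else if k = Suc n then g i else f i)" for k i
  have hP: "\<And>k. k \<le> Suc n \<Longrightarrow> h k \<in> Pi I X"
  proof -
    fix k assume k: "k \<le> Suc n"
    { fix i assume i: "i \<in> I"
      have "h k i \<in> X i"
      proof (cases "i \<in> AA")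
        case True
        thus ?thesis using pp[OF True] k unfolding h_def by (metis le_imp_less_Suc nth_mem subsetD)
      next
        case False thus ?thesis using f g i unfolding h_def by auto
      qed }
    thus "h k \<in> Pi I X" by auto
  qed
  have h0: "h 0 = f" unfolding h_def using pp by (auto intro!: ext)
  have hn: "h (Suc n) = g" unfolding h_def using pp by (auto intro!: ext)
  define ws where "ws = map (\<lambda>k. cls (h k)) [0..<Suc (Suc n)]"
  show "\<exists>m. path_of_length (uprod_univ I U X) (uprod_rel I U X r) (Suc m) W W'"
    unfolding path_of_length_def
  proof (intro exI conjI allI impI)
    show "length ws = Suc (Suc n)" unfolding ws_def by simp
    show "set ws \<subseteq> uprod_univ I U X" unfolding ws_def cls_def by (auto intro!: cls_in_univ hP)
    show "ws ! 0 = W" unfolding ws_def using h0 Wf by (simp del: upt_Suc)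
    show "ws ! Suc n = W'" unfolding ws_def using hn Wg by (simp del: upt_Suc)
  next
    fix k assume k: "k < Suc n"
    have e1: "ws ! k = cls (h k)" unfolding ws_def using k by (simp del: upt_Suc)
    have e2: "ws ! Suc k = cls (h (Suc k))" unfolding ws_def using k by (simp del: upt_Suc)
    have a: "h k \<in> Pi I X" and b: "h (Suc k) \<in> Pi I X" using hP k by auto
    have sub: "AA \<subseteq> {i\<in>I. (h k i, h (Suc k) i) \<in> reflz (X i) (r i)} \<union> {i\<in>I. (h (Suc k) i, h k i) \<in> reflz (X i) (r i)}"
    proof
      fix i assume i: "i \<in> AA"
      have "(p i ! k, p i ! Suc k) \<in> reflz (X i) (r i) \<or> (p i ! k, p i ! Suc k) \<in> (reflz (X i) (r i))\<inverse>"
        using pp[OF i] k by blast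
      moreover have "h k i = p i ! k" "h (Suc k) i = p i ! Suc k" using i unfolding h_def by auto
      moreover have "i \<in> I" using i unfolding AA_def by auto
      ultimately show "i \<in> {i\<in>I. (h k i, h (Suc k) i) \<in> reflz (X i) (r i)} \<union> {i\<in>I. (h (Suc k) i, h k i) \<in> reflz (X i) (r i)}"
        by auto
    qed
    have "{i\<in>I. (h k i, h (Suc k) i) \<in> reflz (X i) (r i)} \<union> {i\<in>I. (h (Suc k) i, h k i) \<in> reflz (X i) (r i)} \<in> U"
      by (rule uf_up[OF u A[folded AA_def] sub]) auto
    hence "{i\<in>I. (h k i, h (Suc k) i) \<in> reflz (X i) (r i)} \<in> U \<or> {i\<in>I. (h (Suc k) i, h k i) \<in> reflz (X i) (r i)} \<in> U"
      by (rule uf_Un[OF u])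
    thus "(ws ! k, ws ! Suc k) \<in> reflz (uprod_univ I U X) (uprod_rel I U X r) \<or>
          (ws ! k, ws ! Suc k) \<in> (reflz (uprod_univ I U X) (uprod_rel I U X r))\<inverse>"
      unfolding e1 e2 cls_def using step_fwd1[OF u a b] step_fwd1[OF u b a] by auto
  qed
qed



lemma pointwise:
  assumes u: "ultrafilter_on I U" and f: "f \<in> Pi I X" and g: "g \<in> Pi I X"
    and P: "path_of_length (uprod_univ I U X) (uprod_rel I U X r) L
              (ueq I U (Pi I X) `` {f}) (ueq I U (Pi I X) `` {g})"
  shows "{i\<in>I. path_of_length (X i) (r i) L (f i) (g i)} \<in> U"
proof -
  obtain ws where l: "length ws = Suc L" and s: "set ws \<subseteq> uprod_univ I U X"
    and w0: "ws ! 0 = ueq I U (Pi I X) `` {f}" and wL: "ws ! L = ueq I U (Pi I X) `` {g}"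
    and st: "\<forall>k<L. (ws ! k, ws ! Suc k) \<in> reflz (uprod_univ I U X) (uprod_rel I U X r) \<or>
                   (ws ! k, ws ! Suc k) \<in> (reflz (uprod_univ I U X) (uprod_rel I U X r))\<inverse>"
    using P unfolding path_of_length_def by blast
  have wsU: "\<And>k. k \<le> L \<Longrightarrow> ws ! k \<in> uprod_univ I U X"
    using s l by (metis le_imp_less_Suc nth_mem subsetD)
  define h where "h k = (SOME h. h \<in> ws ! k)" for k
  have hin: "\<And>k. k \<le> L \<Longrightarrow> h k \<in> ws ! k"
  proof -
    fix k assume k: "k \<le> L"
    obtain p where "p \<in> Pi I X" "ws ! k = ueq I U (Pi I X) `` {p}" using univ_cls[OF wsU[OF k]] by blast
    hence "\<exists>h. h \<in> ws ! k" using self_in_cls[OF u] by blast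
    thus "h k \<in> ws ! k" unfolding h_def by (rule someI_ex)
  qed
  have hP: "\<And>k. k \<le> L \<Longrightarrow> h k \<in> Pi I X" using same_cls[OF u wsU hin hin] by blast
  have S0: "{i\<in>I. f i = h 0 i} \<in> U"
    using same_cls[OF u wsU[of 0] _ hin[of 0]] self_in_cls[OF u f] w0 by simp
  have SL: "{i\<in>I. g i = h L i} \<in> U"
    using same_cls[OF u wsU[of L] _ hin[of L]] self_in_cls[OF u g] wL by simp
  define Ek where "Ek k = {i\<in>I. (h k i, h (Suc k) i) \<in> reflz (X i) (r i) \<or> (h k i, h (Suc k) i) \<in> (reflz (X i) (r i))\<inverse>}" for k
  have EkU: "\<forall>k<L. Ek k \<in> U"
  proof (intro allI impI)
    fix k assume k: "k < L"
    have k1: "k \<le> L" and k2: "Suc k \<le> L" using k by auto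
    have sub1: "{i\<in>I. (h k i, h (Suc k) i) \<in> reflz (X i) (r i)} \<subseteq> Ek k" unfolding Ek_def by auto
    have sub2: "{i\<in>I. (h (Suc k) i, h k i) \<in> reflz (X i) (r i)} \<subseteq> Ek k" unfolding Ek_def by auto
    have EI: "Ek k \<subseteq> I" unfolding Ek_def by auto
    from st k show "Ek k \<in> U"
    proof (elim allE impE disjE)
      assume "(ws ! k, ws ! Suc k) \<in> reflz (uprod_univ I U X) (uprod_rel I U X r)"
      from step_back1[OF u wsU[OF k1] wsU[OF k2] hin[OF k1] hin[OF k2] this]
      show "Ek k \<in> U" by (rule uf_up[OF u _ sub1 EI])
    next
      assume "(ws ! k, ws ! Suc k) \<in> (reflz (uprod_univ I U X) (uprod_rel I U X r))\<inverse>"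
      hence "(ws ! Suc k, ws ! k) \<in> reflz (uprod_univ I U X) (uprod_rel I U X r)" by simp
      from step_back1[OF u wsU[OF k2] wsU[OF k1] hin[OF k2] hin[OF k1] this]
      show "Ek k \<in> U" by (rule uf_up[OF u _ sub2 EI])
    qed simp
  qed
  have big: "(I \<inter> (\<Inter>k<L. Ek k)) \<inter> {i\<in>I. f i = h 0 i} \<inter> {i\<in>I. g i = h L i} \<in> U"
    using uf_int[OF u uf_int[OF u uf_fin_Inter[OF u EkU] S0] SL] .
  have sub: "(I \<inter> (\<Inter>k<L. Ek k)) \<inter> {i\<in>I. f i = h 0 i} \<inter> {i\<in>I. g i = h L i}
      \<subseteq> {i\<in>I. path_of_length (X i) (r i) L (f i) (g i)}"
  proof
    fix i assume i: "i \<in> (I \<inter> (\<Inter>k<L. Ek k)) \<inter> {i\<in>I. f i = h 0 i} \<inter> {i\<in>I. g i = h L i}"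
    hence iI: "i \<in> I" and e0: "f i = h 0 i" and eL: "g i = h L i" and ek: "\<And>k. k < L \<Longrightarrow> i \<in> Ek k"
      by auto
    define vs where "vs = map (\<lambda>k. h k i) [0..<Suc L]"
    have "path_of_length (X i) (r i) L (f i) (g i)"
      unfolding path_of_length_def
    proof (intro exI conjI allI impI)
      show "length vs = Suc L" unfolding vs_def by simp
      show "set vs \<subseteq> X i" unfolding vs_def using hP iI by (auto simp: Pi_iff)
      show "vs ! 0 = f i" unfolding vs_def using e0 by (simp del: upt_Suc)
      show "vs ! L = g i" unfolding vs_def using eL by (simp del: upt_Suc)
    next
      fix k assume k: "k < L"
      have "vs ! k = h k i" "vs ! Suc k = h (Suc k) i" unfolding vs_def using k by (simp_all del: upt_Suc)
      thus "(vs ! k, vs ! Suc k) \<in> reflz (X i) (r i) \<or> (vs ! k, vs ! Suc k) \<in> (reflz (X i) (r i))\<inverse>"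
        using ek[OF k] unfolding Ek_def by simp
    qed
    thus "i \<in> {i\<in>I. path_of_length (X i) (r i) L (f i) (g i)}" using iI by simp
  qed
  show ?thesis by (rule uf_up[OF u big sub]) auto
qed



lemma conn_back:
  assumes u: "ultrafilter_on I U" and np: "nonprincipal I U" and bm: "below_first_measurable I"
    and ne: "\<forall>i\<in>I. X i \<noteq> {}"
    and conn: "connected_str (uprod_univ I U X) (uprod_rel I U X r)"
  shows "\<exists>n. {i\<in>I. models_conn n (X i) (r i)} \<in> U"
proof (rule ccontr)
  assume nn: "\<not> ?thesis"
  define B where "B n = I - {i\<in>I. models_conn n (X i) (r i)}" for n
  have BU: "\<And>n. B n \<in> U" unfolding B_def using nn uf_compl[OF u] by auto
  obtain C :: "nat \<Rightarrow> 'a set" where CU: "\<forall>n. C n \<in> U" and CI: "\<Inter>(range C) \<notin> U"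
    using count_incomplete[OF u np bm] by blast
  define D where "D n = I \<inter> (\<Inter>k<Suc n. C k \<inter> B k)" for n
  have DU: "\<And>n. D n \<in> U" unfolding D_def
    by (rule uf_fin_Inter[OF u]) (use CU BU uf_int[OF u] in blast)
  have Dmono: "\<And>m n. m \<le> n \<Longrightarrow> D n \<subseteq> D m" unfolding D_def by auto
  have DB: "\<And>n. D n \<subseteq> B n" unfolding D_def by auto
  have DI: "\<Inter>(range D) \<notin> U"
  proof
    assume "\<Inter>(range D) \<in> U"
    moreover have "\<Inter>(range D) \<subseteq> \<Inter>(range C)" unfolding D_def by auto
    moreover have "\<Inter>(range C) \<subseteq> I" using uf_sub[OF u] CU by blast
    ultimately have "\<Inter>(range C) \<in> U" by (rule uf_up[OF u])
    thus False using CI by simp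
  qed
  define G where "G = I - \<Inter>(range D)"
  have GU: "G \<in> U" unfolding G_def
    by (rule uf_compl[OF u _ DI]) (use D_def in auto)
  define \<mu> where "\<mu> i = (LEAST m. i \<notin> D m) - 1" for i
  have key: "\<And>i. i \<in> D 0 \<inter> G \<Longrightarrow> i \<in> D (\<mu> i) \<and> (\<forall>N. i \<in> D N \<longrightarrow> N \<le> \<mu> i)"
  proof -
    fix i assume i: "i \<in> D 0 \<inter> G"
    hence ex: "\<exists>m. i \<notin> D m" unfolding G_def by auto
    define L where "L = (LEAST m. i \<notin> D m)"
    have iL: "i \<notin> D L" unfolding L_def using ex by (metis LeastI)
    have L0: "L \<noteq> 0" using iL i by (cases L) auto
    have lt: "\<And>m. m < L \<Longrightarrow> i \<in> D m" unfolding L_def using not_less_Least by blast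
    have "i \<in> D (\<mu> i)" unfolding \<mu>_def L_def[symmetric] using lt L0 by simp
    moreover have "\<forall>N. i \<in> D N \<longrightarrow> N \<le> \<mu> i"
    proof (intro allI impI)
      fix N assume "i \<in> D N"
      hence "\<not> L \<le> N" using Dmono iL by blast
      thus "N \<le> \<mu> i" unfolding \<mu>_def L_def[symmetric] by simp
    qed
    ultimately show "i \<in> D (\<mu> i) \<and> (\<forall>N. i \<in> D N \<longrightarrow> N \<le> \<mu> i)" by blast
  qed
  define pr where "pr i = (if i \<in> D 0 \<inter> G then
      (SOME q. fst q \<in> X i \<and> snd q \<in> X i \<and> \<not> path_of_length (X i) (r i) (Suc (\<mu> i)) (fst q) (snd q))
      else (SOME x. x \<in> X i, SOME x. x \<in> X i))" for i
  have prp: "\<And>i. i \<in> I \<Longrightarrow> fst (pr i) \<in> X i \<and> snd (pr i) \<in> X i \<and>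
       (i \<in> D 0 \<inter> G \<longrightarrow> \<not> path_of_length (X i) (r i) (Suc (\<mu> i)) (fst (pr i)) (snd (pr i)))"
  proof -
    fix i assume iI: "i \<in> I"
    show "?thesis i"
    proof (cases "i \<in> D 0 \<inter> G")
      case True
      have "i \<in> B (\<mu> i)" using key[OF True] DB by blast
      hence "\<not> models_conn (\<mu> i) (X i) (r i)" unfolding B_def by auto
      hence "\<exists>q. fst q \<in> X i \<and> snd q \<in> X i \<and> \<not> path_of_length (X i) (r i) (Suc (\<mu> i)) (fst q) (snd q)"
        unfolding models_conn_def by auto
      hence "fst (pr i) \<in> X i \<and> snd (pr i) \<in> X i \<and> \<not> path_of_length (X i) (r i) (Suc (\<mu> i)) (fst (pr i)) (snd (pr i))"
        unfolding pr_def using True by (simp only: if_True) (rule someI_ex)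
      thus ?thesis by simp
    next
      case False
      have "\<exists>x. x \<in> X i" using ne iI by auto
      hence "(SOME x. x \<in> X i) \<in> X i" by (rule someI_ex)
      moreover have "pr i = (SOME x. x \<in> X i, SOME x. x \<in> X i)"
        unfolding pr_def by (rule if_not_P[OF False])
      ultimately show ?thesis using False by auto
    qed
  qed
  define f where "f i = fst (pr i)" for i
  define g where "g i = snd (pr i)" for i
  have f: "f \<in> Pi I X" and g: "g \<in> Pi I X" unfolding f_def g_def using prp by auto
  obtain m where "path_of_length (uprod_univ I U X) (uprod_rel I U X r) (Suc m)
       (ueq I U (Pi I X) `` {f}) (ueq I U (Pi I X) `` {g})"
    using conn cls_in_univ[OF f] cls_in_univ[OF g] unfolding connected_str_def by blast
  from pointwise[OF u f g this]
  have PU: "{i\<in>I. path_of_length (X i) (r i) (Suc m) (f i) (g i)} \<in> U" .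
  have "{i\<in>I. path_of_length (X i) (r i) (Suc m) (f i) (g i)} \<inter> D (Suc m) \<inter> G \<in> U"
    using uf_int[OF u uf_int[OF u PU DU] GU] .
  hence "{i\<in>I. path_of_length (X i) (r i) (Suc m) (f i) (g i)} \<inter> D (Suc m) \<inter> G \<noteq> {}"
    using uf_empty[OF u] by metis
  then obtain i where iI: "i \<in> I" and pth: "path_of_length (X i) (r i) (Suc m) (f i) (g i)"
    and iD: "i \<in> D (Suc m)" and iG: "i \<in> G" by blast
  have iDG: "i \<in> D 0 \<inter> G" using iD iG Dmono[of 0 "Suc m"] by auto
  have "Suc m \<le> \<mu> i" using key[OF iDG] iD by blast
  hence "Suc m \<le> Suc (\<mu> i)" by simp
  from path_mono[OF pth this] have "path_of_length (X i) (r i) (Suc (\<mu> i)) (f i) (g i)" .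
  thus False using prp[OF iI] iDG unfolding f_def g_def by blast
qed


theorem corollary2p6:
  fixes I :: "'i set" and U :: "'i set set"
    and X :: "'i \<Rightarrow> 'a set" and r :: "'i \<Rightarrow> ('a \<times> 'a) set"
    and Y :: "'b set" and s :: "('b \<times> 'b) set"
  assumes "infinite I"
    and "ultrafilter_on I U"
    and "nonprincipal I U"
    and "\<forall>i\<in>I. L_structure (X i) (r i)"
    and "L_structure Y s"
  shows "((\<exists>n. {i\<in>I. models_conn n (X i) (r i)} \<in> U)
            \<longrightarrow> connected_str (uprod_univ I U X) (uprod_rel I U X r))
       \<and> (below_first_measurable I \<longrightarrow>
            connected_str (uprod_univ I U X) (uprod_rel I U X r)
            \<longrightarrow> (\<exists>n. {i\<in>I. models_conn n (X i) (r i)} \<in> U))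
       \<and> (finite_diameter Y s
            \<longrightarrow> connected_str (uprod_univ I U (\<lambda>_. Y)) (uprod_rel I U (\<lambda>_. Y) (\<lambda>_. s)))
       \<and> (below_first_measurable I \<longrightarrow>
            connected_str (uprod_univ I U (\<lambda>_. Y)) (uprod_rel I U (\<lambda>_. Y) (\<lambda>_. s))
            \<longrightarrow> finite_diameter Y s)"
proof -
  have u: "ultrafilter_on I U" and np: "nonprincipal I U" using assms by auto
  have ne: "\<forall>i\<in>I. X i \<noteq> {}" using assms(4) unfolding L_structure_def by blast
  have neY: "\<forall>i\<in>I. (\<lambda>_. Y) i \<noteq> {}" using assms(5) unfolding L_structure_def by blast
  have p1: "(\<exists>n. {i\<in>I. models_conn n (X i) (r i)} \<in> U)
            \<longrightarrow> connected_str (uprod_univ I U X) (uprod_rel I U X r)"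
    using conn_fwd[OF u] by blast
  have p2: "below_first_measurable I \<longrightarrow>
            connected_str (uprod_univ I U X) (uprod_rel I U X r)
            \<longrightarrow> (\<exists>n. {i\<in>I. models_conn n (X i) (r i)} \<in> U)"
    using conn_back[OF u np _ ne] by blast
  have p3: "finite_diameter Y s
            \<longrightarrow> connected_str (uprod_univ I U (\<lambda>_. Y)) (uprod_rel I U (\<lambda>_. Y) (\<lambda>_. s))"
  proof
    assume "finite_diameter Y s"
    then obtain n where n: "models_conn n Y s" unfolding finite_diameter_def by blast
    have "{i\<in>I. models_conn n ((\<lambda>_. Y) i) ((\<lambda>_. s) i)} = I" using n by auto
    hence "{i\<in>I. models_conn n ((\<lambda>_. Y) i) ((\<lambda>_. s) i)} \<in> U" using uf_I[OF u] by simp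
    thus "connected_str (uprod_univ I U (\<lambda>_. Y)) (uprod_rel I U (\<lambda>_. Y) (\<lambda>_. s))"
      by (rule conn_fwd[OF u])
  qed
  have p4: "below_first_measurable I \<longrightarrow>
            connected_str (uprod_univ I U (\<lambda>_. Y)) (uprod_rel I U (\<lambda>_. Y) (\<lambda>_. s))
            \<longrightarrow> finite_diameter Y s"
  proof (intro impI)
    assume bm: "below_first_measurable I"
      and c: "connected_str (uprod_univ I U (\<lambda>_. Y)) (uprod_rel I U (\<lambda>_. Y) (\<lambda>_. s))"
    obtain n where n: "{i\<in>I. models_conn n ((\<lambda>_. Y) i) ((\<lambda>_. s) i)} \<in> U"
      using conn_back[OF u np bm neY c] by blast
    have "{i\<in>I. models_conn n ((\<lambda>_. Y) i) ((\<lambda>_. s) i)} \<noteq> {}" using n uf_empty[OF u] by metis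
    hence "models_conn n Y s" by auto
    thus "finite_diameter Y s" unfolding finite_diameter_def by blast
  qed
  show ?thesis using p1 p2 p3 p4 by blast
qed

end
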